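(* Let $L$ be the $S$-glued sum of an $S$-glued system $(L_x)_{x\in S}$, and let $U\subseteq L$ be a subset having a least element $u$ and a greatest element $v$ (with respect to the order of $L$). Let $A$ be the set of elements $a\in U$ such that there is no $b\in U$ with $u<b<a$ (and $a\ne u$). Assume that every $a\in A$ covers $u$ in $L$ and that $v=\sup_L A$. Then there is $x\in S$ with $U\subseteq L_x$ such that for all $a,b,c\in U$: $\sup_L(a,b)=c$ iff $a+_x b=c$, and $\inf_L(a,b)=c$ iff $a\cdot_x b=c$.
   Context: Let $S$ be a lattice of finite length (every chain in $S$ is finite), with order $\le$, join $\vee$ and meet $\wedge$; $x\prec y$ means that $y$ covers $x$. An \emph{$S$-glued system} is a family $(L_x,\le_x)_{x\in S}$ of lattices of finite length (with join $+_x$, meet $\cdot_x$, least element $0_x$, greatest element $1_x$), whose underlying sets may overlap, such that for all $x,y\in S$: (1) if $x\le y$ and $L_x\cap L_y\ne\emptyset$, then $L_x\cap L_y$ is a filter of $L_x$ and an ideal of $L_y$; (2) in the situation of (1), for all $a,b\in L_x\cap L_y$: $a\le_x b$ iff $a\le_y b$; (3) if $x\prec y$ then $L_x\cap L_y\ne\emptyset$; (4) $L_x\cap L_y\subseteq L_{x\wedge y}\cap L_{x\vee y}$. The \emph{$S$-glued sum} of the system is the set $L=\bigcup_{x\in S}L_x$ equipped with the relation $\le$ defined as the transitive closure of $\bigcup_{x\in S}\le_x$; it is a lattice. *)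

theory Defs
  imports Main
begin

definition is_ub :: "('a \<Rightarrow> 'a \<Rightarrow> bool) \<Rightarrow> 'a set \<Rightarrow> 'a set \<Rightarrow> 'a \<Rightarrow> bool" where
  "is_ub le A X c \<longleftrightarrow> c \<in> A \<and> (\<forall>y\<in>X. le y c)"

definition is_lb :: "('a \<Rightarrow> 'a \<Rightarrow> bool) \<Rightarrow> 'a set \<Rightarrow> 'a set \<Rightarrow> 'a \<Rightarrow> bool" where
  "is_lb le A X c \<longleftrightarrow> c \<in> A \<and> (\<forall>y\<in>X. le c y)"

definition is_sup :: "('a \<Rightarrow> 'a \<Rightarrow> bool) \<Rightarrow> 'a set \<Rightarrow> 'a set \<Rightarrow> 'a \<Rightarrow> bool" where
  "is_sup le A X c \<longleftrightarrow> is_ub le A X c \<and> (\<forall>d. is_ub le A X d \<longrightarrow> le c d)"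

definition is_inf :: "('a \<Rightarrow> 'a \<Rightarrow> bool) \<Rightarrow> 'a set \<Rightarrow> 'a set \<Rightarrow> 'a \<Rightarrow> bool" where
  "is_inf le A X c \<longleftrightarrow> is_lb le A X c \<and> (\<forall>d. is_lb le A X d \<longrightarrow> le d c)"

definition join :: "('a \<Rightarrow> 'a \<Rightarrow> bool) \<Rightarrow> 'a set \<Rightarrow> 'a \<Rightarrow> 'a \<Rightarrow> 'a" where
  "join le A a b = (THE c. is_sup le A {a, b} c)"

definition meet :: "('a \<Rightarrow> 'a \<Rightarrow> bool) \<Rightarrow> 'a set \<Rightarrow> 'a \<Rightarrow> 'a \<Rightarrow> 'a" where
  "meet le A a b = (THE c. is_inf le A {a, b} c)"

definition partial_order_on' :: "'a set \<Rightarrow> ('a \<Rightarrow> 'a \<Rightarrow> bool) \<Rightarrow> bool" where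
  "partial_order_on' A le \<longleftrightarrow>
     (\<forall>a\<in>A. le a a) \<and>
     (\<forall>a\<in>A. \<forall>b\<in>A. le a b \<and> le b a \<longrightarrow> a = b) \<and>
     (\<forall>a\<in>A. \<forall>b\<in>A. \<forall>c\<in>A. le a b \<and> le b c \<longrightarrow> le a c)"

definition is_lattice :: "'a set \<Rightarrow> ('a \<Rightarrow> 'a \<Rightarrow> bool) \<Rightarrow> bool" where
  "is_lattice A le \<longleftrightarrow> partial_order_on' A le \<and>
     (\<forall>a\<in>A. \<forall>b\<in>A. (\<exists>c. is_sup le A {a, b} c) \<and> (\<exists>c. is_inf le A {a, b} c))"

definition is_chain :: "'a set \<Rightarrow> ('a \<Rightarrow> 'a \<Rightarrow> bool) \<Rightarrow> 'a set \<Rightarrow> bool" where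
  "is_chain A le C \<longleftrightarrow> C \<subseteq> A \<and> (\<forall>a\<in>C. \<forall>b\<in>C. le a b \<or> le b a)"

definition finite_length_lattice :: "'a set \<Rightarrow> ('a \<Rightarrow> 'a \<Rightarrow> bool) \<Rightarrow> bool" where
  "finite_length_lattice A le \<longleftrightarrow> is_lattice A le \<and> (\<forall>C. is_chain A le C \<longrightarrow> finite C)"

definition is_filter :: "'a set \<Rightarrow> ('a \<Rightarrow> 'a \<Rightarrow> bool) \<Rightarrow> 'a set \<Rightarrow> bool" where
  "is_filter A le F \<longleftrightarrow> F \<noteq> {} \<and> F \<subseteq> A \<and>
     (\<forall>a\<in>F. \<forall>b\<in>A. le a b \<longrightarrow> b \<in> F) \<and>
     (\<forall>a\<in>F. \<forall>b\<in>F. meet le A a b \<in> F)"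

definition is_ideal :: "'a set \<Rightarrow> ('a \<Rightarrow> 'a \<Rightarrow> bool) \<Rightarrow> 'a set \<Rightarrow> bool" where
  "is_ideal A le I \<longleftrightarrow> I \<noteq> {} \<and> I \<subseteq> A \<and>
     (\<forall>a\<in>I. \<forall>b\<in>A. le b a \<longrightarrow> b \<in> I) \<and>
     (\<forall>a\<in>I. \<forall>b\<in>I. join le A a b \<in> I)"

definition finite_length_type :: "'s::lattice itself \<Rightarrow> bool" where
  "finite_length_type _ \<longleftrightarrow> (\<forall>C::'s set. (\<forall>a\<in>C. \<forall>b\<in>C. a \<le> b \<or> b \<le> a) \<longrightarrow> finite C)"

definition covers_S :: "'s::order \<Rightarrow> 's \<Rightarrow> bool" where
  "covers_S x y \<longleftrightarrow> x < y \<and> \<not> (\<exists>z. x < z \<and> z < y)"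

definition glued_system :: "('s::lattice \<Rightarrow> 'a set) \<Rightarrow> ('s \<Rightarrow> 'a \<Rightarrow> 'a \<Rightarrow> bool) \<Rightarrow> bool" where
  "glued_system Lc le \<longleftrightarrow>
     finite_length_type TYPE('s) \<and>
     (\<forall>x. finite_length_lattice (Lc x) (le x)) \<and>
     (\<forall>x y. x \<le> y \<and> Lc x \<inter> Lc y \<noteq> {} \<longrightarrow>
        is_filter (Lc x) (le x) (Lc x \<inter> Lc y) \<and> is_ideal (Lc y) (le y) (Lc x \<inter> Lc y) \<and>
        (\<forall>a\<in>Lc x \<inter> Lc y. \<forall>b\<in>Lc x \<inter> Lc y. le x a b \<longleftrightarrow> le y a b)) \<and>
     (\<forall>x y. covers_S x y \<longrightarrow> Lc x \<inter> Lc y \<noteq> {}) \<and>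
     (\<forall>x y. Lc x \<inter> Lc y \<subseteq> Lc (inf x y) \<inter> Lc (sup x y))"

definition glued_carrier :: "('s \<Rightarrow> 'a set) \<Rightarrow> 'a set" where
  "glued_carrier Lc = (\<Union>x. Lc x)"

definition glued_le :: "('s \<Rightarrow> 'a set) \<Rightarrow> ('s \<Rightarrow> 'a \<Rightarrow> 'a \<Rightarrow> bool) \<Rightarrow> 'a \<Rightarrow> 'a \<Rightarrow> bool" where
  "glued_le Lc le a b \<longleftrightarrow>
     (a, b) \<in> (\<Union>x. {(p, q). p \<in> Lc x \<and> q \<in> Lc x \<and> le x p q})\<^sup>+"

end

theory Submission
  imports Defs
begin



lemma po_refl: "partial_order_on' A le \<Longrightarrow> a \<in> A \<Longrightarrow> le a a"
  unfolding partial_order_on'_def by blast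
lemma po_antisym: "partial_order_on' A le \<Longrightarrow> a \<in> A \<Longrightarrow> b \<in> A \<Longrightarrow> le a b \<Longrightarrow> le b a \<Longrightarrow> a = b"
  unfolding partial_order_on'_def by blast
lemma po_trans: "partial_order_on' A le \<Longrightarrow> a \<in> A \<Longrightarrow> b \<in> A \<Longrightarrow> c \<in> A \<Longrightarrow> le a b \<Longrightarrow> le b c \<Longrightarrow> le a c"
  unfolding partial_order_on'_def by blast

lemma po_flip: "partial_order_on' A le \<Longrightarrow> partial_order_on' A (\<lambda>x y. le y x)"
  unfolding partial_order_on'_def by blast

lemma is_inf_flip: "is_inf le A X c = is_sup (\<lambda>x y. le y x) A X c"
  unfolding is_inf_def is_sup_def is_lb_def is_ub_def by blast

lemma meet_flip: "meet le A a b = join (\<lambda>x y. le y x) A a b"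
  unfolding meet_def join_def is_inf_flip ..

lemma join_flip: "join le A a b = meet (\<lambda>x y. le y x) A a b"
  unfolding meet_flip by simp

lemma sup_unique: "partial_order_on' A le \<Longrightarrow> is_sup le A X c \<Longrightarrow> is_sup le A X d \<Longrightarrow> c = d"
proof -
  assume po: "partial_order_on' A le" and c: "is_sup le A X c" and d: "is_sup le A X d"
  have "le c d" "le d c" "c \<in> A" "d \<in> A" using c d unfolding is_sup_def is_ub_def by blast+
  then show "c = d" using po_antisym[OF po] by blast
qed

lemma join_eq: "partial_order_on' A le \<Longrightarrow> is_sup le A {a,b} c \<Longrightarrow> join le A a b = c"
  unfolding join_def by (rule the_equality) (auto dest: sup_unique)

lemma join_sup: "partial_order_on' A le \<Longrightarrow> \<exists>c. is_sup le A {a,b} c \<Longrightarrow> is_sup le A {a,b} (join le A a b)"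
proof -
  assume po: "partial_order_on' A le" and "\<exists>c. is_sup le A {a,b} c"
  then obtain c where c: "is_sup le A {a,b} c" by blast
  then show ?thesis using join_eq[OF po c] by simp
qed

lemma join_props:
  assumes "partial_order_on' A le" "\<exists>c. is_sup le A {a,b} c"
  shows "join le A a b \<in> A" "le a (join le A a b)" "le b (join le A a b)"
    "\<And>d. d \<in> A \<Longrightarrow> le a d \<Longrightarrow> le b d \<Longrightarrow> le (join le A a b) d"
  using join_sup[OF assms] unfolding is_sup_def is_ub_def by auto

lemma is_chain_flip: "is_chain A (\<lambda>x y. le y x) C = is_chain A le C"
  unfolding is_chain_def by blast

lemma lat_flip: "is_lattice A le \<Longrightarrow> is_lattice A (\<lambda>x y. le y x)"
  unfolding is_lattice_def is_inf_def is_sup_def is_lb_def is_ub_def using po_flip[of A le] by blast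

lemma max_exists:
  assumes po: "partial_order_on' A le" and fin: "\<And>C. is_chain A le C \<Longrightarrow> finite C"
    and B: "B \<subseteq> A" "b0 \<in> B"
  shows "\<exists>m\<in>B. \<forall>b\<in>B. le m b \<longrightarrow> b = m"
proof (rule ccontr)
  assume "\<not> ?thesis"
  then have step: "\<forall>m\<in>B. \<exists>b. b \<in> B \<and> le m b \<and> b \<noteq> m" by blast
  define nx where "nx m = (SOME b. b \<in> B \<and> le m b \<and> b \<noteq> m)" for m
  have nx: "nx m \<in> B \<and> le m (nx m) \<and> nx m \<noteq> m" if "m \<in> B" for m
  proof -
    have "\<exists>b. b \<in> B \<and> le m b \<and> b \<noteq> m" using step that by blast
    then show ?thesis unfolding nx_def by (rule someI_ex)
  qed
  define f where "f n = (nx ^^ n) b0" for n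
  have fS: "f (Suc n) = nx (f n)" for n by (simp add: f_def)
  have fB: "f n \<in> B" for n
  proof (induction n)
    case 0 then show ?case using B by (simp add: f_def)
  next
    case (Suc n) then show ?case using nx fS by simp
  qed
  have fA: "f n \<in> A" for n using fB B by blast
  have mono: "le (f i) (f (i + k))" for i k
  proof (induction k)
    case 0 then show ?case using po_refl[OF po] fA by simp
  next
    case (Suc k)
    have "le (f (i+k)) (f (Suc (i+k)))" using nx[OF fB] fS by simp
    then show ?case using po_trans[OF po fA fA fA] Suc by simp
  qed
  have mono2: "i \<le> j \<Longrightarrow> le (f i) (f j)" for i j using mono[of i "j - i"] by simp
  have neq: "i < j \<Longrightarrow> f i \<noteq> f j" for i j
  proof
    assume ij: "i < j" and e: "f i = f j"
    have a: "le (f (Suc i)) (f j)" using mono2 ij by simp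
    have b: "le (f i) (f (Suc i))" and c: "f (Suc i) \<noteq> f i" using nx[OF fB] fS by auto
    from a e have "le (f (Suc i)) (f i)" by simp
    then have "f (Suc i) = f i" using po_antisym[OF po fA fA] b by blast
    then show False using c by simp
  qed
  have inj: "inj f"
  proof (rule injI)
    fix i j assume e: "f i = f j"
    show "i = j"
    proof (rule ccontr)
      assume "i \<noteq> j"
      then have "i < j \<or> j < i" by linarith
      then show False using neq e by metis
    qed
  qed
  have "is_chain A le (range f)"
    unfolding is_chain_def
  proof (intro conjI ballI)
    show "range f \<subseteq> A" using fA by blast
  next
    fix a b assume "a \<in> range f" "b \<in> range f"
    then obtain i j where "a = f i" "b = f j" by blast
    then show "le a b \<or> le b a" using mono2[of i j] mono2[of j i] nat_le_linear[of i j] by (cases "i \<le> j") auto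
  qed
  then have "finite (range f)" by (rule fin)
  then show False using inj by (simp add: finite_image_iff)
qed

lemma min_exists:
  assumes po: "partial_order_on' A le" and fin: "\<And>C. is_chain A le C \<Longrightarrow> finite C"
    and B: "B \<subseteq> A" "b0 \<in> B"
  shows "\<exists>m\<in>B. \<forall>b\<in>B. le b m \<longrightarrow> b = m"
proof -
  have fin': "\<And>C. is_chain A (\<lambda>x y. le y x) C \<Longrightarrow> finite C" using fin is_chain_flip[of A le] by blast
  show ?thesis using max_exists[OF po_flip[OF po] fin' B] .
qed

lemma bottom_exists:
  assumes lat: "is_lattice A le" and fin: "\<And>C. is_chain A le C \<Longrightarrow> finite C" and ne: "a0 \<in> A"
  shows "\<exists>m\<in>A. \<forall>a\<in>A. le m a"
proof -
  have po: "partial_order_on' A le" using lat unfolding is_lattice_def by blast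
  obtain m where m: "m \<in> A" "\<forall>b\<in>A. le b m \<longrightarrow> b = m" using min_exists[OF po fin, of A a0] ne by blast
  have "le m a" if a: "a \<in> A" for a
  proof -
    have "\<exists>c. is_inf le A {m,a} c" using lat m(1) a unfolding is_lattice_def by blast
    then have ex: "\<exists>c. is_sup (\<lambda>x y. le y x) A {m,a} c" unfolding is_inf_flip .
    have po': "partial_order_on' A (\<lambda>x y. le y x)" using po_flip[OF po] .
    note jp = join_props[OF po' ex]
    have j1: "join (\<lambda>x y. le y x) A m a \<in> A" using jp(1) .
    have j2: "le (join (\<lambda>x y. le y x) A m a) m" using jp(2) .
    have "join (\<lambda>x y. le y x) A m a = m" using m(2) j1 j2 by blast
    then show ?thesis using jp(3) by simp
  qed
  then show ?thesis using m by blast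
qed




definition Rl :: "('s \<Rightarrow> 'a set) \<Rightarrow> ('s \<Rightarrow> 'a \<Rightarrow> 'a \<Rightarrow> bool) \<Rightarrow> ('a \<times> 'a) set" where
  "Rl Lc le = {(p,q). \<exists>x. p \<in> Lc x \<and> q \<in> Lc x \<and> le x p q}"

definition bt :: "('s \<Rightarrow> 'a set) \<Rightarrow> ('s \<Rightarrow> 'a \<Rightarrow> 'a \<Rightarrow> bool) \<Rightarrow> 's \<Rightarrow> 'a" where
  "bt Lc le x = (THE b. b \<in> Lc x \<and> (\<forall>a\<in>Lc x. le x b a))"

lemma Rl_flip: "Rl Lc (\<lambda>x a b. le x b a) = (Rl Lc le)\<inverse>"
  unfolding Rl_def by auto

locale gl =
  fixes leS :: "'s \<Rightarrow> 's \<Rightarrow> bool" and infS supS :: "'s \<Rightarrow> 's \<Rightarrow> 's"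
    and Lc :: "'s \<Rightarrow> 'a set" and le :: "'s \<Rightarrow> 'a \<Rightarrow> 'a \<Rightarrow> bool"
  assumes S_refl: "leS x x"
    and S_antisym: "leS x y \<Longrightarrow> leS y x \<Longrightarrow> x = y"
    and S_trans: "leS x y \<Longrightarrow> leS y z \<Longrightarrow> leS x z"
    and inf1: "leS (infS x y) x" and inf2: "leS (infS x y) y"
    and sup1: "leS x (supS x y)" and sup2: "leS y (supS x y)"
    and sup_least: "leS x z \<Longrightarrow> leS y z \<Longrightarrow> leS (supS x y) z"
    and inf_greatest: "leS z x \<Longrightarrow> leS z y \<Longrightarrow> leS z (infS x y)"
    and S_chain: "\<forall>a\<in>C. \<forall>b\<in>C. leS a b \<or> leS b a \<Longrightarrow> finite C"
    and B_lat: "is_lattice (Lc x) (le x)"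
    and B_chain: "is_chain (Lc x) (le x) D \<Longrightarrow> finite D"
    and ov_up: "leS x y \<Longrightarrow> a \<in> Lc x \<Longrightarrow> a \<in> Lc y \<Longrightarrow> b \<in> Lc x \<Longrightarrow> le x a b \<Longrightarrow> b \<in> Lc y"
    and ov_down: "leS x y \<Longrightarrow> a \<in> Lc x \<Longrightarrow> a \<in> Lc y \<Longrightarrow> b \<in> Lc y \<Longrightarrow> le y b a \<Longrightarrow> b \<in> Lc x"
    and ov_meet: "leS x y \<Longrightarrow> a \<in> Lc x \<Longrightarrow> a \<in> Lc y \<Longrightarrow> b \<in> Lc x \<Longrightarrow> b \<in> Lc y
                    \<Longrightarrow> meet (le x) (Lc x) a b \<in> Lc y"
    and ov_join: "leS x y \<Longrightarrow> a \<in> Lc x \<Longrightarrow> a \<in> Lc y \<Longrightarrow> b \<in> Lc x \<Longrightarrow> b \<in> Lc y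
                    \<Longrightarrow> join (le y) (Lc y) a b \<in> Lc x"
    and ov_agree: "leS x y \<Longrightarrow> a \<in> Lc x \<Longrightarrow> a \<in> Lc y \<Longrightarrow> b \<in> Lc x \<Longrightarrow> b \<in> Lc y
                    \<Longrightarrow> le x a b = le y a b"
    and cov: "leS x y \<Longrightarrow> x \<noteq> y \<Longrightarrow> \<not>(\<exists>z. leS x z \<and> z \<noteq> x \<and> leS z y \<and> z \<noteq> y)
                    \<Longrightarrow> Lc x \<inter> Lc y \<noteq> {}"
    and A4: "a \<in> Lc x \<Longrightarrow> a \<in> Lc y \<Longrightarrow> a \<in> Lc (infS x y) \<and> a \<in> Lc (supS x y)"

lemma gl_dual:
  assumes "gl leS infS supS Lc le"
  shows "gl (\<lambda>a b. leS b a) supS infS Lc (\<lambda>x a b. le x b a)"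
proof -
  interpret gl leS infS supS Lc le by fact
  show ?thesis
  proof (unfold_locales, goal_cases)
    case 1 then show ?case by (rule S_refl)
  next case 2 then show ?case using S_antisym by blast
  next case 3 then show ?case using S_trans by blast
  next case 4 then show ?case by (rule sup1)
  next case 5 then show ?case by (rule sup2)
  next case 6 then show ?case by (rule inf1)
  next case 7 then show ?case by (rule inf2)
  next case 8 then show ?case using inf_greatest by blast
  next case 9 then show ?case using sup_least by blast
  next case (10 C) then show ?case using S_chain[of C] by blast
  next case (11 x) then show ?case using lat_flip B_lat by blast
  next case (12 x C) then show ?case using B_chain is_chain_flip[of "Lc x" "le x" C] by blast
  next case (13 x y a b) then show ?case using ov_down by blast
  next case (14 x y a b) then show ?case using ov_up by blast
  next case (15 x y a b) then show ?case using ov_join[of y x a b] unfolding meet_flip by simp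
  next case (16 x y a b) then show ?case using ov_meet[of y x a b] unfolding meet_flip by simp
  next case (17 x y a b) then show ?case using ov_agree[of y x b a] by blast
  next case (18 x y) then show ?case using cov[of y x] by blast
  next case (19 a x y) then show ?case using A4 by blast
  qed
qed

context gl
begin

abbreviation "R \<equiv> Rl Lc le"
abbreviation "jn x \<equiv> join (le x) (Lc x)"
abbreviation "mt x \<equiv> meet (le x) (Lc x)"
abbreviation "bo \<equiv> bt Lc le"
abbreviation "tp \<equiv> bt Lc (\<lambda>x a b. le x b a)"

lemma B_po: "partial_order_on' (Lc x) (le x)"
  using B_lat unfolding is_lattice_def by blast

lemma brefl: "a \<in> Lc x \<Longrightarrow> le x a a" using po_refl[OF B_po] .
lemma btrans: "a \<in> Lc x \<Longrightarrow> b \<in> Lc x \<Longrightarrow> c \<in> Lc x \<Longrightarrow> le x a b \<Longrightarrow> le x b c \<Longrightarrow> le x a c"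
  using po_trans[OF B_po] by blast
lemma bantisym: "a \<in> Lc x \<Longrightarrow> b \<in> Lc x \<Longrightarrow> le x a b \<Longrightarrow> le x b a \<Longrightarrow> a = b"
  using po_antisym[OF B_po] by blast

lemma jn_ex: "a \<in> Lc x \<Longrightarrow> b \<in> Lc x \<Longrightarrow> \<exists>c. is_sup (le x) (Lc x) {a,b} c"
  using B_lat unfolding is_lattice_def by blast

lemma jn_in: "a \<in> Lc x \<Longrightarrow> b \<in> Lc x \<Longrightarrow> jn x a b \<in> Lc x"
  using join_props(1)[OF B_po jn_ex] .
lemma jn_ub1: "a \<in> Lc x \<Longrightarrow> b \<in> Lc x \<Longrightarrow> le x a (jn x a b)"
  using join_props(2)[OF B_po jn_ex] .
lemma jn_ub2: "a \<in> Lc x \<Longrightarrow> b \<in> Lc x \<Longrightarrow> le x b (jn x a b)"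
  using join_props(3)[OF B_po jn_ex] .
lemma jn_least: "a \<in> Lc x \<Longrightarrow> b \<in> Lc x \<Longrightarrow> d \<in> Lc x \<Longrightarrow> le x a d \<Longrightarrow> le x b d \<Longrightarrow> le x (jn x a b) d"
  using join_props(4)[OF B_po jn_ex] .

lemma jn_sup: "a \<in> Lc x \<Longrightarrow> b \<in> Lc x \<Longrightarrow> is_sup (le x) (Lc x) {a,b} (jn x a b)"
  using join_sup[OF B_po jn_ex] .

lemma mt_ex: "a \<in> Lc x \<Longrightarrow> b \<in> Lc x \<Longrightarrow> \<exists>c. is_sup (\<lambda>p q. le x q p) (Lc x) {a,b} c"
  using B_lat unfolding is_lattice_def is_inf_flip by blast

lemma mt_eq: "mt x a b = join (\<lambda>p q. le x q p) (Lc x) a b" by (rule meet_flip)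

lemma mt_in: "a \<in> Lc x \<Longrightarrow> b \<in> Lc x \<Longrightarrow> mt x a b \<in> Lc x"
  unfolding mt_eq using join_props(1)[OF po_flip[OF B_po] mt_ex] .
lemma mt_lb1: "a \<in> Lc x \<Longrightarrow> b \<in> Lc x \<Longrightarrow> le x (mt x a b) a"
  unfolding mt_eq using join_props(2)[OF po_flip[OF B_po] mt_ex] .
lemma mt_lb2: "a \<in> Lc x \<Longrightarrow> b \<in> Lc x \<Longrightarrow> le x (mt x a b) b"
  unfolding mt_eq using join_props(3)[OF po_flip[OF B_po] mt_ex] .

lemma jn_absorb: "a \<in> Lc x \<Longrightarrow> b \<in> Lc x \<Longrightarrow> le x b a \<Longrightarrow> jn x a b = a"
proof -
  assume a: "a \<in> Lc x" and b: "b \<in> Lc x" and ba: "le x b a"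
  have "le x (jn x a b) a" using jn_least[OF a b a brefl[OF a] ba] .
  moreover have "le x a (jn x a b)" using jn_ub1[OF a b] .
  ultimately show ?thesis using bantisym[OF jn_in[OF a b] a] by blast
qed

lemma jn_mono: "a \<in> Lc x \<Longrightarrow> b \<in> Lc x \<Longrightarrow> a' \<in> Lc x \<Longrightarrow> b' \<in> Lc x \<Longrightarrow> le x a a' \<Longrightarrow> le x b b'
   \<Longrightarrow> le x (jn x a b) (jn x a' b')"
proof -
  assume a: "a \<in> Lc x" and b: "b \<in> Lc x" and a': "a' \<in> Lc x" and b': "b' \<in> Lc x"
    and aa: "le x a a'" and bb: "le x b b'"
  have "le x a (jn x a' b')" using btrans[OF a a' jn_in[OF a' b'] aa jn_ub1[OF a' b']] .
  moreover have "le x b (jn x a' b')" using btrans[OF b b' jn_in[OF a' b'] bb jn_ub2[OF a' b']] .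
  ultimately show ?thesis using jn_least[OF a b jn_in[OF a' b']] by blast
qed

lemma bot_ex: "Lc x \<noteq> {} \<Longrightarrow> bo x \<in> Lc x \<and> (\<forall>a\<in>Lc x. le x (bo x) a)"
proof -
  assume "Lc x \<noteq> {}"
  then obtain a0 where "a0 \<in> Lc x" by blast
  then obtain m where m: "m \<in> Lc x" "\<forall>a\<in>Lc x. le x m a"
    using bottom_exists[OF B_lat[of x], of a0] B_chain[of x] by blast
  have "bo x = m" unfolding bt_def
  proof (rule the_equality)
    show "m \<in> Lc x \<and> (\<forall>a\<in>Lc x. le x m a)" using m by blast
  next
    fix b assume b: "b \<in> Lc x \<and> (\<forall>a\<in>Lc x. le x b a)"
    then show "b = m" using bantisym[of b x m] m by blast
  qed
  then show ?thesis using m by simp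
qed

lemma bot_in: "Lc x \<noteq> {} \<Longrightarrow> bo x \<in> Lc x" using bot_ex by blast
lemma bot_le: "Lc x \<noteq> {} \<Longrightarrow> a \<in> Lc x \<Longrightarrow> le x (bo x) a" using bot_ex by blast

lemma S_po: "partial_order_on' UNIV leS"
  unfolding partial_order_on'_def using S_refl S_antisym S_trans by blast
lemma S_fin: "is_chain UNIV leS C \<Longrightarrow> finite C"
  unfolding is_chain_def using S_chain by blast

lemma cover_below:
  assumes "leS x y" "x \<noteq> y"
  shows "\<exists>t. leS x t \<and> leS t y \<and> t \<noteq> y \<and> Lc t \<inter> Lc y \<noteq> {}"
proof -
  let ?B = "{t. leS x t \<and> leS t y \<and> t \<noteq> y}"
  have "x \<in> ?B" using assms S_refl by blast
  then obtain t where t: "t \<in> ?B" "\<forall>b\<in>?B. leS t b \<longrightarrow> b = t"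
    using max_exists[OF S_po S_fin, of ?B x] by blast
  have "\<not>(\<exists>z. leS t z \<and> z \<noteq> t \<and> leS z y \<and> z \<noteq> y)"
  proof
    assume "\<exists>z. leS t z \<and> z \<noteq> t \<and> leS z y \<and> z \<noteq> y"
    then obtain z where z: "leS t z" "z \<noteq> t" "leS z y" "z \<noteq> y" by blast
    then have "z \<in> ?B" using t S_trans by blast
    then show False using t z by blast
  qed
  then have "Lc t \<inter> Lc y \<noteq> {}" using cov t by blast
  then show ?thesis using t by blast
qed

lemma wfS: "wf {(a,b). leS a b \<and> a \<noteq> b}"
  unfolding wf_eq_minimal
proof (intro allI impI)
  fix Q :: "'s set" and x assume "x \<in> Q"
  then obtain m where m: "m \<in> Q" "\<forall>b\<in>Q. leS b m \<longrightarrow> b = m"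
    using min_exists[OF S_po S_fin, of Q x] by blast
  then show "\<exists>z\<in>Q. \<forall>y. (y, z) \<in> {(a, b). leS a b \<and> a \<noteq> b} \<longrightarrow> y \<notin> Q" by blast
qed

lemma ne_above: "leS x y \<Longrightarrow> Lc x \<noteq> {} \<Longrightarrow> Lc y \<noteq> {}"
  using cover_below by (cases "x = y") blast+

lemma M0: "leS x y \<Longrightarrow> Lc x \<noteq> {} \<Longrightarrow> (bo x, bo y) \<in> R\<^sup>*"
proof (induction y rule: wf_induct_rule[OF wfS])
  case (1 y)
  show ?case
  proof (cases "x = y")
    case True then show ?thesis by simp
  next
    case False
    then obtain t where t: "leS x t" "leS t y" "t \<noteq> y" "Lc t \<inter> Lc y \<noteq> {}"
      using cover_below 1(2) by blast
    have IH: "(bo x, bo t) \<in> R\<^sup>*" using 1 t by blast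
    have ney: "Lc y \<noteq> {}" and net: "Lc t \<noteq> {}" using t by blast+
    obtain c where c: "c \<in> Lc t" "c \<in> Lc y" using t by blast
    have by_t: "bo y \<in> Lc t" using ov_down[OF t(2) c bot_in[OF ney] bot_le[OF ney c(2)]] .
    have "le t (bo t) (bo y)" using bot_le[OF net by_t] .
    then have "(bo t, bo y) \<in> R" unfolding Rl_def using by_t bot_in[OF net] by blast
    then show ?thesis using IH by simp
  qed
qed

end



context gl
begin

lemma RI: "a \<in> Lc x \<Longrightarrow> b \<in> Lc x \<Longrightarrow> le x a b \<Longrightarrow> (a,b) \<in> R"
  unfolding Rl_def by blast
lemma RE: "(a,b) \<in> R \<Longrightarrow> (\<And>x. a \<in> Lc x \<Longrightarrow> b \<in> Lc x \<Longrightarrow> le x a b \<Longrightarrow> P) \<Longrightarrow> P"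
  unfolding Rl_def by blast

lemma G: "(p,q) \<in> R\<^sup>* \<Longrightarrow> p \<in> Lc z \<Longrightarrow> (\<exists>w. leS z w \<and> q \<in> Lc w) \<and> (q \<in> Lc z \<longrightarrow> le z p q)"
proof (induction rule: rtrancl_induct)
  case base
  then show ?case using S_refl brefl by blast
next
  case (step y q)
  from step(2) obtain x where x: "y \<in> Lc x" "q \<in> Lc x" "le x y q" by (rule RE)
  from step(3)[OF step(4)] obtain w where w: "leS z w" "y \<in> Lc w" by blast
  have IH2: "y \<in> Lc z \<Longrightarrow> le z p y" using step(3)[OF step(4)] by blast
  define w' where "w' = supS w x"
  have yw': "y \<in> Lc w'" unfolding w'_def using A4[OF w(2) x(1)] by blast
  have xw': "leS x w'" unfolding w'_def by (rule sup2)
  have qw': "q \<in> Lc w'" using ov_up[OF xw' x(1) yw' x(2) x(3)] .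
  have zw': "leS z w'" unfolding w'_def using S_trans[OF w(1) sup1] .
  have part2: "le z p q" if qz: "q \<in> Lc z"
  proof -
    have lw: "le w' y q" using ov_agree[OF xw' x(1) yw' x(2) qw'] x(3) by simp
    have yz: "y \<in> Lc z" using ov_down[OF zw' qz qw' yw' lw] .
    have lz: "le z y q" using ov_agree[OF zw' yz yw' qz qw'] lw by simp
    show ?thesis using btrans[OF step(4) yz qz IH2[OF yz] lz] .
  qed
  show ?case using zw' qw' part2 by blast
qed

lemma H: "(r,q) \<in> R\<^sup>* \<Longrightarrow> q \<in> Lc z \<Longrightarrow> r \<in> Lc w \<Longrightarrow> leS z w \<Longrightarrow> r \<in> Lc z"
proof (induction arbitrary: w rule: converse_rtrancl_induct)
  case base
  then show ?case by simp
next
  case (step r y)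
  from step(1) obtain x where x: "r \<in> Lc x" "y \<in> Lc x" "le x r y" by (rule RE)
  define w' where "w' = supS w x"
  have rw': "r \<in> Lc w'" unfolding w'_def using A4[OF step(5) x(1)] by blast
  have xw': "leS x w'" unfolding w'_def by (rule sup2)
  have yw': "y \<in> Lc w'" using ov_up[OF xw' x(1) rw' x(2) x(3)] .
  have zw': "leS z w'" unfolding w'_def using S_trans[OF step(6) sup1] .
  have yz: "y \<in> Lc z" using step(3)[OF step(4) yw' zw'] .
  have lw: "le w' r y" using ov_agree[OF xw' x(1) rw' x(2) yw'] x(3) by simp
  show ?case using ov_down[OF zw' yz yw' rw' lw] .
qed

lemma C2: "p \<in> Lc z \<Longrightarrow> q \<in> Lc z \<Longrightarrow> (p,r) \<in> R\<^sup>* \<Longrightarrow> (r,q) \<in> R\<^sup>* \<Longrightarrow> r \<in> Lc z"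
proof -
  assume p: "p \<in> Lc z" and q: "q \<in> Lc z" and pr: "(p,r) \<in> R\<^sup>*" and rq: "(r,q) \<in> R\<^sup>*"
  obtain w where w: "leS z w" "r \<in> Lc w" using G[OF pr p] by blast
  show ?thesis using H[OF rq q w(2) w(1)] .
qed

lemma C3: "p \<in> Lc z \<Longrightarrow> q \<in> Lc z \<Longrightarrow> (p,q) \<in> R\<^sup>* \<Longrightarrow> le z p q"
proof -
  assume p: "p \<in> Lc z" and q: "q \<in> Lc z" and pq: "(p,q) \<in> R\<^sup>*"
  have "q \<in> Lc z \<longrightarrow> le z p q" using G[OF pq p] by (rule conjunct2)
  then show ?thesis using q by blast
qed

lemma C1: "p \<in> Lc z \<Longrightarrow> (p,q) \<in> R\<^sup>* \<Longrightarrow> (q,p) \<in> R\<^sup>* \<Longrightarrow> p = q"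
proof -
  assume p: "p \<in> Lc z" and pq: "(p,q) \<in> R\<^sup>*" and qp: "(q,p) \<in> R\<^sup>*"
  have q: "q \<in> Lc z" using C2[OF p p pq qp] .
  show "p = q" using bantisym[OF p q C3[OF p q pq] C3[OF q p qp]] .
qed

lemma SL: "leS x y \<Longrightarrow> a \<in> Lc x \<Longrightarrow> a \<in> Lc y \<Longrightarrow> b \<in> Lc x \<Longrightarrow> b \<in> Lc y \<Longrightarrow> jn x a b = jn y a b"
proof -
  assume xy: "leS x y" and ax: "a \<in> Lc x" and ay: "a \<in> Lc y" and bx: "b \<in> Lc x" and by': "b \<in> Lc y"
  define j where "j = jn x a b"
  define j' where "j' = jn y a b"
  have jx: "j \<in> Lc x" unfolding j_def using jn_in[OF ax bx] .
  have jy: "j \<in> Lc y" using ov_up[OF xy ax ay jx] jn_ub1[OF ax bx] unfolding j_def by blast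
  have j'y: "j' \<in> Lc y" unfolding j'_def using jn_in[OF ay by'] .
  have j'x: "j' \<in> Lc x" unfolding j'_def using ov_join[OF xy ax ay bx by'] .
  have "le y a j'" "le y b j'" unfolding j'_def using jn_ub1[OF ay by'] jn_ub2[OF ay by'] by auto
  then have "le x a j'" "le x b j'" using ov_agree[OF xy ax ay j'x j'y] ov_agree[OF xy bx by' j'x j'y] by auto
  then have l1: "le x j j'" unfolding j_def using jn_least[OF ax bx j'x] by blast
  have "le x a j" "le x b j" unfolding j_def using jn_ub1[OF ax bx] jn_ub2[OF ax bx] by auto
  then have "le y a j" "le y b j" using ov_agree[OF xy ax ay jx jy] ov_agree[OF xy bx by' jx jy] by auto
  then have "le y j' j" unfolding j'_def using jn_least[OF ay by' jy] by blast
  then have "le x j' j" using ov_agree[OF xy j'x j'y jx jy] by simp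
  then have "j = j'" using bantisym[OF jx j'x l1] by blast
  then show ?thesis unfolding j_def j'_def .
qed

lemma tp_ex: "Lc x \<noteq> {} \<Longrightarrow> tp x \<in> Lc x \<and> (\<forall>a\<in>Lc x. le x a (tp x))"
proof -
  interpret D: gl "\<lambda>a b. leS b a" supS infS Lc "\<lambda>x a b. le x b a" by (rule gl_dual[OF gl_axioms])
  assume ne: "Lc x \<noteq> {}" show ?thesis using D.bot_ex[OF ne] .
qed
lemma tp_in: "Lc x \<noteq> {} \<Longrightarrow> tp x \<in> Lc x" using tp_ex by (rule conjunct1)
lemma tp_ge: "Lc x \<noteq> {} \<Longrightarrow> a \<in> Lc x \<Longrightarrow> le x a (tp x)" using tp_ex[THEN conjunct2] by simp

lemma M1: "leS x y \<Longrightarrow> Lc x \<noteq> {} \<Longrightarrow> (tp x, tp y) \<in> R\<^sup>*"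
proof -
  interpret D: gl "\<lambda>a b. leS b a" supS infS Lc "\<lambda>x a b. le x b a" by (rule gl_dual[OF gl_axioms])
  assume xy: "leS x y" and ne: "Lc x \<noteq> {}"
  have ney: "Lc y \<noteq> {}" using ne_above[OF xy ne] .
  have "(tp y, tp x) \<in> (Rl Lc (\<lambda>x a b. le x b a))\<^sup>*" using D.M0[of x y, OF xy ney] .
  then have "(tp y, tp x) \<in> (R\<inverse>)\<^sup>*" unfolding Rl_flip[of Lc le] .
  then show ?thesis by (simp add: rtrancl_converse)
qed

lemma SC: "a \<in> Lc x \<Longrightarrow> a \<in> Lc w \<Longrightarrow> leS x y \<Longrightarrow> leS y w \<Longrightarrow> a \<in> Lc y"
proof -
  assume ax: "a \<in> Lc x" and aw: "a \<in> Lc w" and xy: "leS x y" and yw: "leS y w"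
  have nex: "Lc x \<noteq> {}" and new: "Lc w \<noteq> {}" using ax aw by blast+
  have ney: "Lc y \<noteq> {}" using ne_above[OF xy nex] .
  have "(bo y, bo w) \<in> R\<^sup>*" using M0[OF yw ney] .
  moreover have "(bo w, a) \<in> R" using RI[OF bot_in[OF new] aw bot_le[OF new aw]] .
  ultimately have 1: "(bo y, a) \<in> R\<^sup>*" by simp
  have "(a, tp x) \<in> R" using RI[OF ax tp_in[OF nex] tp_ge[OF nex ax]] .
  moreover have "(tp x, tp y) \<in> R\<^sup>*" using M1[OF xy nex] .
  ultimately have 2: "(a, tp y) \<in> R\<^sup>*" by (simp add: converse_rtrancl_into_rtrancl)
  show ?thesis using C2[OF bot_in[OF ney] tp_in[OF ney] 1 2] .
qed

end



context gl
begin

lemma mt_glb: "a \<in> Lc x \<Longrightarrow> b \<in> Lc x \<Longrightarrow> d \<in> Lc x \<Longrightarrow> le x d a \<Longrightarrow> le x d b \<Longrightarrow> le x d (mt x a b)"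
  unfolding mt_eq using join_props(4)[OF po_flip[OF B_po] mt_ex] by blast

lemma star: "(p,d) \<in> R\<^sup>* \<Longrightarrow> p \<in> Lc x \<Longrightarrow> leS x y \<Longrightarrow> leS y w \<Longrightarrow> d \<in> Lc w
   \<Longrightarrow> Lc x \<inter> Lc y \<noteq> {} \<Longrightarrow> (jn x p (bo y), d) \<in> R\<^sup>*"
proof (induction arbitrary: x y w rule: converse_rtrancl_induct)
  case base
  have dx: "d \<in> Lc x" and xy: "leS x y" using base by auto
  have dy: "d \<in> Lc y" using SC[OF base(1) base(4) base(2) base(3)] .
  have ney: "Lc y \<noteq> {}" using dy by blast
  obtain c where c: "c \<in> Lc x" "c \<in> Lc y" using base(5) by blast
  have byy: "bo y \<in> Lc y" using bot_in[OF ney] .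
  have byx: "bo y \<in> Lc x" using ov_down[OF xy c(1) c(2) byy bot_le[OF ney c(2)]] .
  have "le y (bo y) d" using bot_le[OF ney dy] .
  then have "le x (bo y) d" using ov_agree[OF xy byx byy dx dy] by simp
  then have "jn x d (bo y) = d" using jn_absorb[OF dx byx] by simp
  then show ?case by simp
next
  case (step p p1)
  have pR: "(p,p1) \<in> R" and p1d: "(p1,d) \<in> R\<^sup>*" and px: "p \<in> Lc x" and xy: "leS x y"
    and yw: "leS y w" and dw: "d \<in> Lc w" and nexy: "Lc x \<inter> Lc y \<noteq> {}" using step by auto
  obtain v where v: "p \<in> Lc v" "p1 \<in> Lc v" "le v p p1" using pR by (rule RE)
  obtain c where c: "c \<in> Lc x" "c \<in> Lc y" using nexy by blast
  have ney: "Lc y \<noteq> {}" using c by blast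
  have byy: "bo y \<in> Lc y" using bot_in[OF ney] .
  have byx: "bo y \<in> Lc x" using ov_down[OF xy c(1) c(2) byy bot_le[OF ney c(2)]] .
  define q where "q = jn x p (bo y)"
  have qx: "q \<in> Lc x" unfolding q_def using jn_in[OF px byx] .
  have pq: "le x p q" unfolding q_def using jn_ub1[OF px byx] .
  have bq: "le x (bo y) q" unfolding q_def using jn_ub2[OF px byx] .
  have qy: "q \<in> Lc y" using ov_up[OF xy byx byy qx bq] .
  define x' where "x' = supS x v"
  have xx': "leS x x'" unfolding x'_def by (rule sup1)
  have vx': "leS v x'" unfolding x'_def by (rule sup2)
  have px': "p \<in> Lc x'" unfolding x'_def using A4[OF px v(1)] by blast
  have p1x': "p1 \<in> Lc x'" using ov_up[OF vx' v(1) px' v(2) v(3)] .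
  have pp1: "le x' p p1" using ov_agree[OF vx' v(1) px' v(2) p1x'] v(3) by simp
  have qx': "q \<in> Lc x'" using ov_up[OF xx' px px' qx pq] .
  define y' where "y' = supS x' y"
  have x'y': "leS x' y'" unfolding y'_def by (rule sup1)
  have yy': "leS y y'" unfolding y'_def by (rule sup2)
  have qy': "q \<in> Lc y'" unfolding y'_def using A4[OF qx' qy] by blast
  obtain w2 where w2: "leS v w2" "d \<in> Lc w2" using G[OF p1d v(2)] by blast
  define W where "W = supS w w2"
  have dW: "d \<in> Lc W" unfolding W_def using A4[OF dw w2(2)] by blast
  have wW: "leS w W" and w2W: "leS w2 W" unfolding W_def by (rule sup1, rule sup2)
  have xW: "leS x W" using S_trans[OF S_trans[OF xy yw] wW] .
  have vW: "leS v W" using S_trans[OF w2(1) w2W] .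
  have x'W: "leS x' W" unfolding x'_def using sup_least[OF xW vW] .
  have y'W: "leS y' W" unfolding y'_def using sup_least[OF x'W S_trans[OF yw wW]] .
  have nex'y': "Lc x' \<inter> Lc y' \<noteq> {}" using qx' qy' by blast
  define P where "P = jn x' p1 (bo y')"
  have IH: "(P, d) \<in> R\<^sup>*" unfolding P_def using step(3)[OF p1x' x'y' y'W dW nex'y'] .
  have ney': "Lc y' \<noteq> {}" using qy' by blast
  have by'y': "bo y' \<in> Lc y'" using bot_in[OF ney'] .
  have by'x': "bo y' \<in> Lc x'" using ov_down[OF x'y' qx' qy' by'y' bot_le[OF ney' qy']] .
  have Px': "P \<in> Lc x'" unfolding P_def using jn_in[OF p1x' by'x'] .
  have Py': "P \<in> Lc y'" using ov_up[OF x'y' by'x' by'y' Px'] jn_ub2[OF p1x' by'x'] unfolding P_def by blast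
  define t where "t = mt x' P q"
  have tx': "t \<in> Lc x'" unfolding t_def using mt_in[OF Px' qx'] .
  have ty': "t \<in> Lc y'" unfolding t_def using ov_meet[OF x'y' Px' Py' qx' qy'] .
  have tq': "le x' t q" unfolding t_def using mt_lb2[OF Px' qx'] .
  have tP': "le x' t P" unfolding t_def using mt_lb1[OF Px' qx'] .
  have tx: "t \<in> Lc x" using ov_down[OF xx' qx qx' tx' tq'] .
  have tqy': "le y' t q" using ov_agree[OF x'y' tx' ty' qx' qy'] tq' by simp
  have ty: "t \<in> Lc y" using ov_down[OF yy' qy qy' ty' tqy'] .
  have pq': "le x' p q" using ov_agree[OF xx' px px' qx qx'] pq by simp
  have pP': "le x' p P" using btrans[OF px' p1x' Px' pp1] jn_ub1[OF p1x' by'x'] unfolding P_def by blast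
  have pt': "le x' p t" unfolding t_def using mt_glb[OF Px' qx' px' pP' pq'] .
  have pt: "le x p t" using ov_agree[OF xx' px px' tx tx'] pt' by simp
  have "le y (bo y) t" using bot_le[OF ney ty] .
  then have bt: "le x (bo y) t" using ov_agree[OF xy byx byy tx ty] by simp
  have qt: "le x q t" unfolding q_def using jn_least[OF px byx tx pt bt] .
  have tq: "le x t q" using ov_agree[OF xx' tx tx' qx qx'] tq' by simp
  have "t = q" using bantisym[OF tx qx tq qt] .
  then have "le x' q P" using tP' by simp
  then have "(q, P) \<in> R" using RI[OF qx' Px'] by simp
  then have "(q, d) \<in> R\<^sup>*" using IH by (rule converse_rtrancl_into_rtrancl)
  then show ?case unfolding q_def .
qed

lemma C4: "(p,d) \<in> R\<^sup>* \<Longrightarrow> p \<in> Lc x \<Longrightarrow> s \<in> Lc x \<Longrightarrow> (s,d) \<in> R\<^sup>* \<Longrightarrow> (jn x p s, d) \<in> R\<^sup>*"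
proof (induction arbitrary: x s rule: converse_rtrancl_induct)
  case base
  have "le x s d" using C3[OF base(2) base(1) base(3)] .
  then have "jn x d s = d" using jn_absorb[OF base(1) base(2)] by simp
  then show ?case by simp
next
  case (step p p1)
  have pR: "(p,p1) \<in> R" and p1d: "(p1,d) \<in> R\<^sup>*" and px: "p \<in> Lc x" and sx: "s \<in> Lc x"
    and sd: "(s,d) \<in> R\<^sup>*" using step by auto
  have pd: "(p,d) \<in> R\<^sup>*" using converse_rtrancl_into_rtrancl[OF pR p1d] .
  obtain v where v: "p \<in> Lc v" "p1 \<in> Lc v" "le v p p1" using pR by (rule RE)
  define x' where "x' = supS x v"
  have xx': "leS x x'" unfolding x'_def by (rule sup1)
  have vx': "leS v x'" unfolding x'_def by (rule sup2)
  have px': "p \<in> Lc x'" unfolding x'_def using A4[OF px v(1)] by blast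
  have p1x': "p1 \<in> Lc x'" using ov_up[OF vx' v(1) px' v(2) v(3)] .
  have pp1: "le x' p p1" using ov_agree[OF vx' v(1) px' v(2) p1x'] v(3) by simp
  obtain w where w: "leS x w" "d \<in> Lc w" using G[OF pd px] by blast
  obtain w2 where w2: "leS v w2" "d \<in> Lc w2" using G[OF p1d v(2)] by blast
  define W where "W = supS w w2"
  have dW: "d \<in> Lc W" unfolding W_def using A4[OF w(2) w2(2)] by blast
  have wW: "leS w W" and w2W: "leS w2 W" unfolding W_def by (rule sup1, rule sup2)
  have x'W: "leS x' W" unfolding x'_def using sup_least[OF S_trans[OF w(1) wW] S_trans[OF w2(1) w2W]] .
  have nex: "Lc x \<inter> Lc x' \<noteq> {}" using px px' by blast
  define s' where "s' = jn x s (bo x')"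
  have s'd: "(s', d) \<in> R\<^sup>*" unfolding s'_def using star[OF sd sx xx' x'W dW nex] .
  have nex': "Lc x' \<noteq> {}" using px' by blast
  have bx'x': "bo x' \<in> Lc x'" using bot_in[OF nex'] .
  have bx'x: "bo x' \<in> Lc x" using ov_down[OF xx' px px' bx'x' bot_le[OF nex' px']] .
  have s'x: "s' \<in> Lc x" unfolding s'_def using jn_in[OF sx bx'x] .
  have s'x': "s' \<in> Lc x'" using ov_up[OF xx' bx'x bx'x' s'x] jn_ub2[OF sx bx'x] unfolding s'_def by blast
  have IH: "(jn x' p1 s', d) \<in> R\<^sup>*" using step(3)[OF p1x' s'x' s'd] .
  have ss': "le x s s'" unfolding s'_def using jn_ub1[OF sx bx'x] .
  have 1: "le x (jn x p s) (jn x p s')" using jn_mono[OF px sx px s'x brefl[OF px] ss'] .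
  have 2: "jn x p s' = jn x' p s'" using SL[OF xx' px px' s'x s'x'] .
  have 3: "le x' (jn x' p s') (jn x' p1 s')" using jn_mono[OF px' s'x' p1x' s'x' pp1 brefl[OF s'x']] .
  have r1: "(jn x p s, jn x p s') \<in> R" using RI[OF jn_in[OF px sx] jn_in[OF px s'x] 1] .
  have r2: "(jn x p s', jn x' p1 s') \<in> R" using RI[OF jn_in[OF px' s'x'] jn_in[OF p1x' s'x'] 3] 2 by simp
  show ?case using converse_rtrancl_into_rtrancl[OF r1 converse_rtrancl_into_rtrancl[OF r2 IH]] .
qed

lemma glued_le_R: "glued_le Lc le a b \<longleftrightarrow> (a,b) \<in> R\<^sup>+"
proof -
  have "(\<Union>x. {(p, q). p \<in> Lc x \<and> q \<in> Lc x \<and> le x p q}) = R" unfolding Rl_def by blast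
  then show ?thesis unfolding glued_le_def by simp
qed

lemma star_plus: "p \<in> Lc z \<Longrightarrow> (p,q) \<in> R\<^sup>* \<Longrightarrow> (p,q) \<in> R\<^sup>+"
proof -
  assume p: "p \<in> Lc z" and pq: "(p,q) \<in> R\<^sup>*"
  show ?thesis
  proof (cases "p = q")
    case True
    have "(p,p) \<in> R" using RI[OF p p brefl[OF p]] .
    then show ?thesis using True by blast
  next
    case False then show ?thesis using pq rtranclD by metis
  qed
qed

lemma join_agree:
  assumes a: "a \<in> Lc z" and b: "b \<in> Lc z"
  shows "join (glued_le Lc le) (glued_carrier Lc) a b = jn z a b"
  unfolding join_def[of "glued_le Lc le"]
proof (rule the_equality)
  let ?j = "jn z a b"
  have jz: "?j \<in> Lc z" using jn_in[OF a b] .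
  have aj: "glued_le Lc le a ?j" unfolding glued_le_R using RI[OF a jz jn_ub1[OF a b]] by blast
  have bj: "glued_le Lc le b ?j" unfolding glued_le_R using RI[OF b jz jn_ub2[OF a b]] by blast
  have ub: "is_ub (glued_le Lc le) (glued_carrier Lc) {a,b} ?j"
    unfolding is_ub_def glued_carrier_def using jz aj bj by blast
  have least: "glued_le Lc le ?j d" if d: "is_ub (glued_le Lc le) (glued_carrier Lc) {a,b} d" for d
  proof -
    have "glued_le Lc le a d" "glued_le Lc le b d" using d unfolding is_ub_def by auto
    then have "(a,d) \<in> R\<^sup>*" "(b,d) \<in> R\<^sup>*" unfolding glued_le_R by auto
    then have "(?j, d) \<in> R\<^sup>*" using C4[OF _ a b] by blast
    then show ?thesis unfolding glued_le_R using star_plus[OF jz] by blast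
  qed
  show "is_sup (glued_le Lc le) (glued_carrier Lc) {a,b} ?j" unfolding is_sup_def using ub least by blast
  fix c assume c: "is_sup (glued_le Lc le) (glued_carrier Lc) {a,b} c"
  then have "glued_le Lc le c ?j" "glued_le Lc le ?j c" using ub least unfolding is_sup_def by auto
  then have "(c, ?j) \<in> R\<^sup>*" "(?j, c) \<in> R\<^sup>*" unfolding glued_le_R by auto
  then show "c = ?j" using C1[OF jz] by blast
qed

end



context gl
begin

lemma first_step:
  assumes "(c,a) \<in> R\<^sup>*" "c = u" "u \<noteq> a"
    and nb: "\<forall>c'\<in>glued_carrier Lc. (u,c') \<in> R\<^sup>+ \<and> u \<noteq> c' \<and> (c',a) \<in> R\<^sup>+ \<longrightarrow> c' = a"
  shows "\<exists>x. u \<in> Lc x \<and> a \<in> Lc x \<and> le x u a"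
  using assms(1-3)
proof (induction rule: converse_rtrancl_induct)
  case base then show ?case by simp
next
  case (step c c1)
  show ?case
  proof (cases "c1 = u")
    case True then show ?thesis using step by blast
  next
    case False
    obtain x where x: "c \<in> Lc x" "c1 \<in> Lc x" "le x c c1" using step(1) by (rule RE)
    have "(u,c1) \<in> R\<^sup>+" using step(1) step(4) by blast
    moreover have "(c1,a) \<in> R\<^sup>+" using star_plus[OF x(2) step(2)] .
    moreover have "c1 \<in> glued_carrier Lc" unfolding glued_carrier_def using x(2) by blast
    ultimately have "c1 = a" using nb False by blast
    then show ?thesis using x step(4) by blast
  qed
qed

end

lemma sys_gl:
  fixes Lc :: "'s::lattice \<Rightarrow> 'a set" and le :: "'s \<Rightarrow> 'a \<Rightarrow> 'a \<Rightarrow> bool"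
  assumes sys: "glued_system Lc le"
  shows "gl (\<le>) inf sup Lc le"
proof -
  note S = sys[unfolded glued_system_def]
  have fl: "finite_length_type TYPE('s)" using S by (rule conjunct1)
  have bl: "\<And>x. finite_length_lattice (Lc x) (le x)" using S[THEN conjunct2, THEN conjunct1] by blast
  have ov: "\<And>x y. x \<le> y \<Longrightarrow> Lc x \<inter> Lc y \<noteq> {} \<Longrightarrow>
        is_filter (Lc x) (le x) (Lc x \<inter> Lc y) \<and> is_ideal (Lc y) (le y) (Lc x \<inter> Lc y) \<and>
        (\<forall>a\<in>Lc x \<inter> Lc y. \<forall>b\<in>Lc x \<inter> Lc y. le x a b \<longleftrightarrow> le y a b)"
    using S[THEN conjunct2, THEN conjunct2, THEN conjunct1] by blast
  have cv: "\<And>x y. covers_S x y \<Longrightarrow> Lc x \<inter> Lc y \<noteq> {}"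
    using S[THEN conjunct2, THEN conjunct2, THEN conjunct2, THEN conjunct1] by blast
  have a4: "\<And>x y. Lc x \<inter> Lc y \<subseteq> Lc (inf x y) \<inter> Lc (sup x y)"
    using S[THEN conjunct2, THEN conjunct2, THEN conjunct2, THEN conjunct2] by blast
  show ?thesis
  proof (unfold_locales, goal_cases)
    case 1 then show ?case by simp
  next case 2 then show ?case by simp
  next case 3 then show ?case by simp
  next case 4 then show ?case by simp
  next case 5 then show ?case by simp
  next case 6 then show ?case by simp
  next case 7 then show ?case by simp
  next case 8 then show ?case by simp
  next case 9 then show ?case by simp
  next case (10 C) then show ?case using fl unfolding finite_length_type_def by blast
  next case (11 x) then show ?case using bl unfolding finite_length_lattice_def by blast
  next case (12 x D) then show ?case using bl unfolding finite_length_lattice_def by blast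
  next case (13 x y a b)
    then have "Lc x \<inter> Lc y \<noteq> {}" by blast
    then have "is_filter (Lc x) (le x) (Lc x \<inter> Lc y)" using ov 13 by blast
    then show ?case using 13 unfolding is_filter_def by blast
  next case (14 x y a b)
    then have "Lc x \<inter> Lc y \<noteq> {}" by blast
    then have "is_ideal (Lc y) (le y) (Lc x \<inter> Lc y)" using ov 14 by blast
    then show ?case using 14 unfolding is_ideal_def by blast
  next case (15 x y a b)
    then have "Lc x \<inter> Lc y \<noteq> {}" by blast
    then have "is_filter (Lc x) (le x) (Lc x \<inter> Lc y)" using ov 15 by blast
    then show ?case using 15 unfolding is_filter_def by blast
  next case (16 x y a b)
    then have "Lc x \<inter> Lc y \<noteq> {}" by blast
    then have "is_ideal (Lc y) (le y) (Lc x \<inter> Lc y)" using ov 16 by blast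
    then show ?case using 16 unfolding is_ideal_def by blast
  next case (17 x y a b)
    then have "Lc x \<inter> Lc y \<noteq> {}" by blast
    then show ?case using ov 17 by blast
  next case (18 x y)
    then have "covers_S x y" unfolding covers_S_def by (auto simp: less_le)
    then show ?case using cv by blast
  next case (19 a x y) then show ?case using a4 by blast
  qed
qed

lemma flip_glued: "(\<lambda>p q. glued_le Lc le q p) = glued_le Lc (\<lambda>x a b. le x b a)"
proof (intro ext)
  fix p q
  have e: "\<And>le'. (\<Union>x. {(p, q). p \<in> Lc x \<and> q \<in> Lc x \<and> le' x p q}) = Rl Lc le'" unfolding Rl_def by blast
  show "glued_le Lc le q p = glued_le Lc (\<lambda>x a b. le x b a) p q"
    unfolding glued_le_def e Rl_flip[of Lc le] by (simp add: trancl_converse)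
qed




theorem lemma3p1:
  fixes Lc :: "'s::lattice \<Rightarrow> 'a set"
    and le :: "'s \<Rightarrow> 'a \<Rightarrow> 'a \<Rightarrow> bool"
    and U :: "'a set" and u v :: 'a
  defines "L \<equiv> glued_carrier Lc"
    and "leL \<equiv> glued_le Lc le"
  assumes sys: "glued_system Lc le"
    and UL: "U \<subseteq> L"
    and u_least: "u \<in> U" "\<forall>b\<in>U. leL u b"
    and v_greatest: "v \<in> U" "\<forall>b\<in>U. leL b v"
    and A_covers: "\<forall>a\<in>{a\<in>U. a \<noteq> u \<and> \<not> (\<exists>b\<in>U. leL u b \<and> u \<noteq> b \<and> leL b a \<and> b \<noteq> a)}.
                     leL u a \<and> u \<noteq> a \<and> \<not> (\<exists>z\<in>L. leL u z \<and> u \<noteq> z \<and> leL z a \<and> z \<noteq> a)"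
    and v_sup: "is_sup leL L {a\<in>U. a \<noteq> u \<and> \<not> (\<exists>b\<in>U. leL u b \<and> u \<noteq> b \<and> leL b a \<and> b \<noteq> a)} v"
  shows "\<exists>x. U \<subseteq> Lc x \<and>
           (\<forall>a\<in>U. \<forall>b\<in>U. \<forall>c\<in>U.
              (join leL L a b = c \<longleftrightarrow> join (le x) (Lc x) a b = c) \<and>
              (meet leL L a b = c \<longleftrightarrow> meet (le x) (Lc x) a b = c))"
proof -
  interpret G: gl "(\<le>)::'s\<Rightarrow>'s\<Rightarrow>bool" inf sup Lc le by (rule sys_gl[OF sys])
  interpret D: gl "\<lambda>a b::'s. b \<le> a" sup inf Lc "\<lambda>x a b. le x b a" by (rule gl_dual[OF sys_gl[OF sys]])
  define A where "A = {a\<in>U. a \<noteq> u \<and> \<not> (\<exists>b\<in>U. leL u b \<and> u \<noteq> b \<and> leL b a \<and> b \<noteq> a)}"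
  have Acov: "\<forall>a\<in>A. leL u a \<and> u \<noteq> a \<and> \<not> (\<exists>z\<in>L. leL u z \<and> u \<noteq> z \<and> leL z a \<and> z \<noteq> a)"
    using A_covers unfolding A_def .
  have vsup: "is_sup leL L A v" using v_sup unfolding A_def .
  have AU: "A \<subseteq> U" unfolding A_def by blast
  have Rp: "leL p q \<longleftrightarrow> (p,q) \<in> (Rl Lc le)\<^sup>+" for p q unfolding leL_def by (rule G.glued_le_R)
  have Rs: "leL p q \<Longrightarrow> (p,q) \<in> (Rl Lc le)\<^sup>*" for p q unfolding Rp by (rule trancl_into_rtrancl)
  have Lz: "p \<in> Lc x \<Longrightarrow> p \<in> L" for p x unfolding L_def glued_carrier_def by blast
  have uL: "u \<in> L" using UL u_least(1) by blast
  then obtain x0 where x0: "u \<in> Lc x0" unfolding L_def glued_carrier_def by blast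
  obtain m0 where m0: "m0 \<in> {x. u \<in> Lc x}" "\<forall>b\<in>{x. u \<in> Lc x}. m0 \<le> b \<longrightarrow> b = m0"
    using max_exists[OF G.S_po G.S_fin, of "{x. u \<in> Lc x}" x0] x0 by blast
  define z where "z = m0"
  have uz: "u \<in> Lc z" using m0(1) unfolding z_def by simp
  have zmax: "x \<le> z" if ux: "u \<in> Lc x" for x
  proof -
    have "u \<in> Lc (sup x z)" using G.A4[OF ux uz] by blast
    moreover have "z \<le> sup x z" by simp
    ultimately have "sup x z = z" using m0(2) unfolding z_def by blast
    then show ?thesis by (metis sup.cobounded1)
  qed
  have Az: "a \<in> Lc z" if aA: "a \<in> A" for a
  proof -
    have cv: "leL u a" "u \<noteq> a" "\<not> (\<exists>c\<in>L. leL u c \<and> u \<noteq> c \<and> leL c a \<and> c \<noteq> a)"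
      using Acov aA by blast+
    have ua: "(u,a) \<in> (Rl Lc le)\<^sup>*" using Rs[OF cv(1)] .
    have nb: "\<forall>c'\<in>glued_carrier Lc. (u,c') \<in> (Rl Lc le)\<^sup>+ \<and> u \<noteq> c' \<and> (c',a) \<in> (Rl Lc le)\<^sup>+ \<longrightarrow> c' = a"
      using cv(3) unfolding Rp L_def by blast
    obtain x where x: "u \<in> Lc x" "a \<in> Lc x" "le x u a" using G.first_step[OF ua refl cv(2) nb] by blast
    show ?thesis using G.ov_up[OF zmax[OF x(1)] x(1) uz x(2) x(3)] .
  qed
  have uv: "(u,v) \<in> (Rl Lc le)\<^sup>*" using Rs v_greatest(2) u_least(1) by blast
  define J where "J = {m \<in> Lc z. (m,v) \<in> (Rl Lc le)\<^sup>*}"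
  have uJ: "u \<in> J" unfolding J_def using uz uv by blast
  have Jz: "J \<subseteq> Lc z" unfolding J_def by blast
  obtain m where m: "m \<in> J" "\<forall>b\<in>J. le z m b \<longrightarrow> b = m"
    using max_exists[OF G.B_po[of z] G.B_chain[of z] Jz uJ] by blast
  have mz: "m \<in> Lc z" and mv: "(m,v) \<in> (Rl Lc le)\<^sup>*" using m(1) unfolding J_def by auto
  have am: "leL a m" if aA: "a \<in> A" for a
  proof -
    have az: "a \<in> Lc z" using Az[OF aA] .
    have av: "(a,v) \<in> (Rl Lc le)\<^sup>*" using Rs v_greatest(2) AU aA by blast
    define j where "j = join (le z) (Lc z) m a"
    have jz: "j \<in> Lc z" unfolding j_def using G.jn_in[OF mz az] .
    have jv: "(j,v) \<in> (Rl Lc le)\<^sup>*" unfolding j_def using G.C4[OF mv mz az av] .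
    have "j \<in> J" unfolding J_def using jz jv by blast
    moreover have "le z m j" unfolding j_def using G.jn_ub1[OF mz az] .
    ultimately have "j = m" using m(2) by blast
    moreover have "le z a j" unfolding j_def using G.jn_ub2[OF mz az] .
    ultimately have "le z a m" by simp
    then have "(a,m) \<in> Rl Lc le" using G.RI[OF az mz] by blast
    then show ?thesis unfolding Rp by blast
  qed
  have "is_ub leL L A m" unfolding is_ub_def using Lz[OF mz] am by blast
  then have "leL v m" using vsup unfolding is_sup_def by blast
  then have "m = v" using G.C1[OF mz mv Rs] by blast
  then have vz: "v \<in> Lc z" using mz by simp
  have Uz: "U \<subseteq> Lc z"
  proof
    fix b assume b: "b \<in> U"
    have "(u,b) \<in> (Rl Lc le)\<^sup>*" "(b,v) \<in> (Rl Lc le)\<^sup>*" using Rs u_least(2) v_greatest(2) b by blast+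
    then show "b \<in> Lc z" using G.C2[OF uz vz] by blast
  qed
  have J1: "join leL L a b = join (le z) (Lc z) a b" if "a \<in> U" "b \<in> U" for a b
    unfolding L_def leL_def using G.join_agree[of a z b] Uz that by (simp add: subset_iff)
  have J2: "meet leL L a b = meet (le z) (Lc z) a b" if ab: "a \<in> U" "b \<in> U" for a b
  proof -
    have e: "(\<lambda>p q. leL q p) = glued_le Lc (\<lambda>x a b. le x b a)" unfolding leL_def by (rule flip_glued)
    have "meet leL L a b = join (\<lambda>p q. leL q p) L a b" by (rule meet_flip)
    also have "\<dots> = join (glued_le Lc (\<lambda>x a b. le x b a)) L a b" by (simp only: e)
    also have "join (glued_le Lc (\<lambda>x a b. le x b a)) L a b = join (\<lambda>p q. le z q p) (Lc z) a b"
      unfolding L_def using D.join_agree[of a z b] Uz ab by (simp add: subset_iff)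
    also have "\<dots> = meet (le z) (Lc z) a b" by (rule meet_flip[symmetric])
    finally show ?thesis .
  qed
  show ?thesis
  proof (intro exI[of _ z] conjI ballI)
    show "U \<subseteq> Lc z" by (rule Uz)
  next
    fix a b c assume "a \<in> U" "b \<in> U" "c \<in> U"
    then show "(join leL L a b = c) = (join (le z) (Lc z) a b = c)"
      and "(meet leL L a b = c) = (meet (le z) (Lc z) a b = c)" using J1 J2 by simp_all
  qed
qed


end
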